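(* Let $M$ be an end-decisive MM-QFA that accepts every word of $L$ with probability at least $\lambda+\epsilon$ and every word not in $L$ with probability at most $\lambda-\epsilon$. Then for every positive integer $n$ there exists an MM-QFA $M'$ that accepts every word of $L$ with probability at least $(\lambda+\epsilon)^n$ and every word not in $L$ with probability at most $(\lambda-\epsilon)^n$.
   Context: A measure-many quantum finite automaton (MM-QFA) over $\Sigma$ is a tuple $(Q,\Sigma,\{U_\sigma\}_{\sigma\in\Sigma\cup\{\$\}},q_0,Q_{acc},Q_{rej})$ with $Q$ finite indexing an orthonormal basis of $\mathbb{C}^Q$, end-marker $\$\notin\Sigma$, unitary $U_\sigma$, initial state $q_0$, and $Q$ partitioned into $Q_{acc},Q_{rej},Q_{non}$ with orthogonal projections $P_{acc},P_{rej},P_{non}$. On input $x$ it processes $x\$$ maintaining $(\psi,p_{acc},p_{rej})$, initially $(|q_0\rangle,0,0)$; on reading $\sigma$: $\psi'=U_\sigma\psi$, $p_{acc}\mathrel{+}=\|P_{acc}\psi'\|^2$, $p_{rej}\mathrel{+}=\|P_{rej}\psi'\|^2$, $\psi\leftarrow P_{non}\psi'$; the acceptance probability is the final $p_{acc}$. It is end-decisive if $P_{acc}\psi'=0$ after reading every non-end-marker symbol, on every input. *)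

theory Defs
  imports "Jordan_Normal_Form.Matrix"
begin

text \<open>Measure-many quantum finite automata.  The basis states are the naturals
  0,...,dim-1; the input alphabet is a finite type 'a; the end-marker is None
  and an input symbol s is Some s.\<close>

record 'a mmqfa =
  qdim  :: nat
  trans :: "'a option \<Rightarrow> complex mat"
  qinit :: nat
  qacc  :: "nat set"
  qrej  :: "nat set"

definition cadjoint :: "complex mat \<Rightarrow> complex mat" where
  "cadjoint U = mat (dim_col U) (dim_row U) (\<lambda>(i,j). cnj (U $$ (j,i)))"

definition unitary_mat :: "nat \<Rightarrow> complex mat \<Rightarrow> bool" where
  "unitary_mat d U \<longleftrightarrow> U \<in> carrier_mat d d \<and> U * cadjoint U = 1\<^sub>m d \<and> cadjoint U * U = 1\<^sub>m d"

definition is_mmqfa :: "'a mmqfa \<Rightarrow> bool" where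
  "is_mmqfa M \<longleftrightarrow> qinit M < qdim M \<and> qacc M \<subseteq> {..<qdim M} \<and> qrej M \<subseteq> {..<qdim M}
     \<and> qacc M \<inter> qrej M = {} \<and> (\<forall>s. unitary_mat (qdim M) (trans M s))"

definition qnon :: "'a mmqfa \<Rightarrow> nat set" where
  "qnon M = {..<qdim M} - qacc M - qrej M"

definition proj :: "nat set \<Rightarrow> complex vec \<Rightarrow> complex vec" where
  "proj S v = vec (dim_vec v) (\<lambda>i. if i \<in> S then v $ i else 0)"

definition nsq :: "complex vec \<Rightarrow> real" where
  "nsq v = (\<Sum>i<dim_vec v. (cmod (v $ i))\<^sup>2)"

definition qstep :: "'a mmqfa \<Rightarrow> 'a option \<Rightarrow> complex vec \<times> real \<times> real \<Rightarrow> complex vec \<times> real \<times> real" where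
  "qstep M s st = (case st of (psi, pa, pr) \<Rightarrow>
     (let psi' = trans M s *\<^sub>v psi in
       (proj (qnon M) psi', pa + nsq (proj (qacc M) psi'), pr + nsq (proj (qrej M) psi'))))"

definition qrun :: "'a mmqfa \<Rightarrow> 'a option list \<Rightarrow> complex vec \<times> real \<times> real" where
  "qrun M ws = fold (qstep M) ws (unit_vec (qdim M) (qinit M), 0, 0)"

definition accprob :: "'a mmqfa \<Rightarrow> 'a list \<Rightarrow> real" where
  "accprob M x = fst (snd (qrun M (map Some x @ [None])))"

definition end_decisive :: "'a mmqfa \<Rightarrow> bool" where
  "end_decisive M \<longleftrightarrow> (\<forall>w s. proj (qacc M) (trans M (Some s) *\<^sub>v fst (qrun M (map Some w))) = 0\<^sub>v (qdim M))"

end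

theory Submission
  imports Defs
begin

lemma sum_split:
  fixes f :: "nat \<Rightarrow> 'b::comm_monoid_add"
  shows "(\<Sum>k<m*n. f k) = (\<Sum>a<m. \<Sum>b<n. f (a*n+b))"
proof -
  have "(\<Sum>k<m*n. f k) = (\<Sum>a<m. sum f {a*n..<a*n+n})"
    using sum.nat_group[of f n m] by simp
  also have "\<dots> = (\<Sum>a<m. \<Sum>b<n. f (a*n+b))"
  proof (rule sum.cong[OF refl])
    fix a
    have "sum f {a*n..<a*n+n} = sum f ((\<lambda>b. a*n+b) ` {..<n})"
    proof -
      have "{a*n..<a*n+n} = (\<lambda>b. a*n+b) ` {..<n}"
      proof safe
        fix j assume "j \<in> {a * n..<a * n + n}"
        then show "j \<in> (\<lambda>b. a*n+b) ` {..<n}"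
          by (auto intro!: image_eqI[of _ _ "j - a * n"])
      qed auto
      then show ?thesis by simp
    qed
    also have "\<dots> = (\<Sum>b<n. f (a*n+b))"
      by (subst sum.reindex) (auto simp: inj_on_def)
    finally show "sum f {a*n..<a*n+n} = (\<Sum>b<n. f (a*n+b))" .
  qed
  finally show ?thesis .
qed

lemma div_lt: "(k::nat) < d1 * d2 \<Longrightarrow> k div d2 < d1"
  by (simp add: less_mult_imp_div_less)

lemma mod_lt: "(k::nat) < d1 * d2 \<Longrightarrow> k mod d2 < d2"
  by (metis mod_less_divisor mult_0_right not_less_zero zero_less_iff_neq_zero)

lemma comb_lt: "(a::nat) < d1 \<Longrightarrow> b < d2 \<Longrightarrow> a * d2 + b < d1 * d2"
proof -
  assume "a < d1" "b < d2"
  then have "a * d2 + b < (a+1) * d2" by simp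
  also have "\<dots> \<le> d1 * d2" using \<open>a < d1\<close> by (intro mult_right_mono) auto
  finally show ?thesis .
qed

definition kronm :: "nat \<Rightarrow> nat \<Rightarrow> complex mat \<Rightarrow> complex mat \<Rightarrow> complex mat" where
  "kronm d1 d2 A B = mat (d1*d2) (d1*d2) (\<lambda>(i,j). A $$ (i div d2, j div d2) * B $$ (i mod d2, j mod d2))"

definition kronv :: "nat \<Rightarrow> nat \<Rightarrow> complex vec \<Rightarrow> complex vec \<Rightarrow> complex vec" where
  "kronv d1 d2 u v = vec (d1*d2) (\<lambda>k. u $ (k div d2) * v $ (k mod d2))"

lemma kronm_mult:
  assumes "A \<in> carrier_mat d1 d1" "B \<in> carrier_mat d2 d2" "C \<in> carrier_mat d1 d1" "D \<in> carrier_mat d2 d2"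
  shows "kronm d1 d2 A B * kronm d1 d2 C D = kronm d1 d2 (A*C) (B*D)"
proof (rule eq_matI)
  fix i j assume i: "i < dim_row (kronm d1 d2 (A*C) (B*D))" and j: "j < dim_col (kronm d1 d2 (A*C) (B*D))"
  then have i': "i < d1*d2" and j': "j < d1*d2" by (auto simp: kronm_def)
  have "(kronm d1 d2 A B * kronm d1 d2 C D) $$ (i,j)
     = (\<Sum>k<d1*d2. (A $$ (i div d2, k div d2) * B $$ (i mod d2, k mod d2)) * (C $$ (k div d2, j div d2) * D $$ (k mod d2, j mod d2)))"
    using i' j' by (simp add: kronm_def scalar_prod_def atLeast0LessThan)
  also have "\<dots> = (\<Sum>a<d1. \<Sum>b<d2. (A $$ (i div d2, a) * B $$ (i mod d2, b)) * (C $$ (a, j div d2) * D $$ (b, j mod d2)))"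
    by (subst sum_split) (intro sum.cong refl, simp)
  also have "\<dots> = (\<Sum>a<d1. A $$ (i div d2, a) * C $$ (a, j div d2)) * (\<Sum>b<d2. B $$ (i mod d2, b) * D $$ (b, j mod d2))"
    by (simp add: sum_product algebra_simps)
  also have "\<dots> = kronm d1 d2 (A*C) (B*D) $$ (i,j)"
    using i' j' assms div_lt[OF i'] div_lt[OF j'] mod_lt[OF i'] mod_lt[OF j']
    by (simp add: kronm_def scalar_prod_def atLeast0LessThan)
  finally show "(kronm d1 d2 A B * kronm d1 d2 C D) $$ (i,j) = kronm d1 d2 (A*C) (B*D) $$ (i,j)" .
qed (auto simp: kronm_def)

lemma cadjoint_carrier: "A \<in> carrier_mat d d \<Longrightarrow> cadjoint A \<in> carrier_mat d d"
  by (simp add: cadjoint_def)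

lemma kronm_carrier: "kronm d1 d2 A B \<in> carrier_mat (d1*d2) (d1*d2)"
  by (simp add: kronm_def)

lemma kronm_cadjoint:
  assumes "A \<in> carrier_mat d1 d1" "B \<in> carrier_mat d2 d2"
  shows "cadjoint (kronm d1 d2 A B) = kronm d1 d2 (cadjoint A) (cadjoint B)"
proof (rule eq_matI)
  fix i j assume i: "i < dim_row (kronm d1 d2 (cadjoint A) (cadjoint B))" and j: "j < dim_col (kronm d1 d2 (cadjoint A) (cadjoint B))"
  then have i': "i < d1*d2" and j': "j < d1*d2" by (auto simp: kronm_def)
  show "cadjoint (kronm d1 d2 A B) $$ (i, j) = kronm d1 d2 (cadjoint A) (cadjoint B) $$ (i, j)"
    using i' j' assms div_lt[OF i'] div_lt[OF j'] mod_lt[OF i'] mod_lt[OF j']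
    by (simp add: kronm_def cadjoint_def)
qed (auto simp: kronm_def cadjoint_def)

lemma kronm_one: "kronm d1 d2 (1\<^sub>m d1) (1\<^sub>m d2) = 1\<^sub>m (d1*d2)"
proof (rule eq_matI)
  fix i j assume i: "i < dim_row (1\<^sub>m (d1*d2))" and j: "j < dim_col (1\<^sub>m (d1*d2) :: complex mat)"
  then have i': "i < d1*d2" and j': "j < d1*d2" by auto
  have "(i div d2 = j div d2 \<and> i mod d2 = j mod d2) = (i = j)"
    by (metis div_mult_mod_eq)
  then show "kronm d1 d2 (1\<^sub>m d1) (1\<^sub>m d2) $$ (i, j) = 1\<^sub>m (d1*d2) $$ (i, j)"
    using i' j' div_lt[OF i'] div_lt[OF j'] mod_lt[OF i'] mod_lt[OF j']
    by (auto simp: kronm_def)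
qed (auto simp: kronm_def)

lemma kronm_unitary:
  assumes "unitary_mat d1 A" "unitary_mat d2 B"
  shows "unitary_mat (d1*d2) (kronm d1 d2 A B)"
  using assms unfolding unitary_mat_def
  by (simp add: kronm_carrier kronm_cadjoint kronm_mult cadjoint_carrier kronm_one)

lemma kron_mult_vec:
  assumes "A \<in> carrier_mat d1 d1" "B \<in> carrier_mat d2 d2" "dim_vec u = d1" "dim_vec v = d2"
  shows "kronm d1 d2 A B *\<^sub>v kronv d1 d2 u v = kronv d1 d2 (A *\<^sub>v u) (B *\<^sub>v v)"
proof (rule eq_vecI)
  fix i assume i: "i < dim_vec (kronv d1 d2 (A *\<^sub>v u) (B *\<^sub>v v))"
  then have i': "i < d1*d2" by (simp add: kronv_def)
  have "(kronm d1 d2 A B *\<^sub>v kronv d1 d2 u v) $ i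
     = (\<Sum>k<d1*d2. (A $$ (i div d2, k div d2) * B $$ (i mod d2, k mod d2)) * (u $ (k div d2) * v $ (k mod d2)))"
    using i' by (simp add: kronm_def kronv_def scalar_prod_def atLeast0LessThan)
  also have "\<dots> = (\<Sum>a<d1. \<Sum>b<d2. (A $$ (i div d2, a) * B $$ (i mod d2, b)) * (u $ a * v $ b))"
    by (subst sum_split) (intro sum.cong refl, simp)
  also have "\<dots> = (\<Sum>a<d1. A $$ (i div d2, a) * u $ a) * (\<Sum>b<d2. B $$ (i mod d2, b) * v $ b)"
    by (simp add: sum_product algebra_simps)
  also have "\<dots> = kronv d1 d2 (A *\<^sub>v u) (B *\<^sub>v v) $ i"
    using i' assms div_lt[OF i'] mod_lt[OF i']
    by (simp add: kronv_def scalar_prod_def atLeast0LessThan)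
  finally show "(kronm d1 d2 A B *\<^sub>v kronv d1 d2 u v) $ i = kronv d1 d2 (A *\<^sub>v u) (B *\<^sub>v v) $ i" .
qed (simp add: kronm_def kronv_def)

lemma kron_proj:
  assumes "dim_vec u = d1" "dim_vec v = d2"
    and S: "\<And>k. k < d1*d2 \<Longrightarrow> k \<in> S \<longleftrightarrow> k div d2 \<in> S1 \<and> k mod d2 \<in> S2"
  shows "proj S (kronv d1 d2 u v) = kronv d1 d2 (proj S1 u) (proj S2 v)"
proof (rule eq_vecI)
  fix i assume "i < dim_vec (kronv d1 d2 (proj S1 u) (proj S2 v))"
  then have i': "i < d1*d2" by (simp add: kronv_def)
  show "proj S (kronv d1 d2 u v) $ i = kronv d1 d2 (proj S1 u) (proj S2 v) $ i"
    using i' assms div_lt[OF i'] mod_lt[OF i'] S[OF i']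
    by (simp add: kronv_def proj_def)
qed (simp add: kronv_def proj_def)

lemma kron_nsq:
  assumes "dim_vec u = d1" "dim_vec v = d2"
  shows "nsq (kronv d1 d2 u v) = nsq u * nsq v"
proof -
  have "nsq (kronv d1 d2 u v) = (\<Sum>k<d1*d2. (cmod (u $ (k div d2)))\<^sup>2 * (cmod (v $ (k mod d2)))\<^sup>2)"
    by (simp add: nsq_def kronv_def norm_mult power_mult_distrib)
  also have "\<dots> = (\<Sum>a<d1. \<Sum>b<d2. (cmod (u $ a))\<^sup>2 * (cmod (v $ b))\<^sup>2)"
    by (subst sum_split) (intro sum.cong refl, simp)
  also have "\<dots> = nsq u * nsq v"
    using assms by (simp add: nsq_def sum_product)
  finally show ?thesis .
qed

lemma kron_unit:
  assumes "q1 < d1" "q2 < d2"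
  shows "unit_vec (d1*d2) (q1*d2+q2) = kronv d1 d2 (unit_vec d1 q1) (unit_vec d2 q2)"
proof (rule eq_vecI)
  fix i assume "i < dim_vec (kronv d1 d2 (unit_vec d1 q1) (unit_vec d2 q2))"
  then have i': "i < d1*d2" by (simp add: kronv_def)
  have "(i = q1*d2+q2) = (i div d2 = q1 \<and> i mod d2 = q2)"
    proof
    assume "i = q1*d2+q2" then show "i div d2 = q1 \<and> i mod d2 = q2" using assms by simp
  next
    assume "i div d2 = q1 \<and> i mod d2 = q2" then show "i = q1*d2+q2" by (metis div_mult_mod_eq)
  qed
  then show "unit_vec (d1*d2) (q1*d2+q2) $ i = kronv d1 d2 (unit_vec d1 q1) (unit_vec d2 q2) $ i"
    using i' div_lt[OF i'] mod_lt[OF i'] by (auto simp: kronv_def unit_vec_def)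
qed (simp add: kronv_def)

lemma kron_zero: "kronv d1 d2 (0\<^sub>v d1) v = 0\<^sub>v (d1*d2)"
proof (rule eq_vecI)
  fix i assume "i < dim_vec (0\<^sub>v (d1*d2) :: complex vec)"
  then have i': "i < d1*d2" by simp
  then show "kronv d1 d2 (0\<^sub>v d1) v $ i = 0\<^sub>v (d1*d2) $ i"
    using div_lt[OF i'] by (simp add: kronv_def)
qed (simp add: kronv_def)

definition prodq :: "'a mmqfa \<Rightarrow> 'a mmqfa \<Rightarrow> 'a mmqfa" where
  "prodq M1 M2 = \<lparr>qdim = qdim M1 * qdim M2,
     trans = (\<lambda>s. kronm (qdim M1) (qdim M2) (trans M1 s) (trans M2 s)),
     qinit = qinit M1 * qdim M2 + qinit M2,
     qacc = {k. k div qdim M2 \<in> qacc M1 \<and> k mod qdim M2 \<in> qacc M2},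
     qrej = {k. k < qdim M1 * qdim M2 \<and> \<not> (k div qdim M2 \<in> qacc M1 \<and> k mod qdim M2 \<in> qacc M2)
               \<and> \<not> (k div qdim M2 \<in> qnon M1 \<and> k mod qdim M2 \<in> qnon M2)}\<rparr>"

lemma prodq_simps:
  "qdim (prodq M1 M2) = qdim M1 * qdim M2"
  "trans (prodq M1 M2) s = kronm (qdim M1) (qdim M2) (trans M1 s) (trans M2 s)"
  "qinit (prodq M1 M2) = qinit M1 * qdim M2 + qinit M2"
  "qacc (prodq M1 M2) = {k. k div qdim M2 \<in> qacc M1 \<and> k mod qdim M2 \<in> qacc M2}"
  by (simp_all add: prodq_def)

lemma prodq_is:
  assumes "is_mmqfa M1" "is_mmqfa M2"
  shows "is_mmqfa (prodq M1 M2)"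
proof -
  have q: "qinit M1 < qdim M1" "qinit M2 < qdim M2" using assms by (auto simp: is_mmqfa_def)
  have acc: "qacc (prodq M1 M2) \<subseteq> {..<qdim (prodq M1 M2)}"
  proof
    fix k assume "k \<in> qacc (prodq M1 M2)"
    then have "k div qdim M2 < qdim M1" "k mod qdim M2 < qdim M2" using assms by (auto simp: is_mmqfa_def prodq_def)
    then have "k div qdim M2 * qdim M2 + k mod qdim M2 < qdim M1 * qdim M2" by (rule comb_lt)
    then show "k \<in> {..<qdim (prodq M1 M2)}" by (simp add: prodq_def)
  qed
  show ?thesis unfolding is_mmqfa_def
    using acc comb_lt[OF q] assms kronm_unitary
    by (auto simp: prodq_def is_mmqfa_def)
qed

lemma prodq_non:
  assumes "is_mmqfa M1" "k < qdim M1 * qdim M2"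
  shows "k \<in> qnon (prodq M1 M2) \<longleftrightarrow> k div qdim M2 \<in> qnon M1 \<and> k mod qdim M2 \<in> qnon M2"
  using assms by (auto simp: qnon_def prodq_def)

lemma qrun_snoc: "qrun M (ws @ [s]) = qstep M s (qrun M ws)"
  by (simp add: qrun_def)

lemma fst_qstep: "fst (qstep M s st) = proj (qnon M) (trans M s *\<^sub>v fst st)"
  by (cases st) (simp add: qstep_def Let_def)

lemma pa_qstep: "fst (snd (qstep M s st)) = fst (snd st) + nsq (proj (qacc M) (trans M s *\<^sub>v fst st))"
  by (cases st) (simp add: qstep_def Let_def)

lemma dim_proj[simp]: "dim_vec (proj S v) = dim_vec v"
  by (simp add: proj_def)

lemma dim_run:
  assumes "is_mmqfa M"
  shows "dim_vec (fst (qrun M ws)) = qdim M"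
proof (induction ws rule: rev_induct)
  case Nil then show ?case by (simp add: qrun_def)
next
  case (snoc s ws)
  have "trans M s \<in> carrier_mat (qdim M) (qdim M)" using assms by (simp add: is_mmqfa_def unitary_mat_def)
  then show ?case by (simp add: qrun_snoc fst_qstep)
qed

lemma nsq_zero[simp]: "nsq (0\<^sub>v d) = 0"
  by (simp add: nsq_def)

lemma ed_pa0:
  assumes "end_decisive M"
  shows "fst (snd (qrun M (map Some w))) = 0"
proof (induction w rule: rev_induct)
  case Nil then show ?case by (simp add: qrun_def)
next
  case (snoc s w)
  then show ?case using assms by (simp add: qrun_snoc pa_qstep end_decisive_def)
qed

lemma accprob_formula:
  assumes "end_decisive M"
  shows "accprob M x = nsq (proj (qacc M) (trans M None *\<^sub>v fst (qrun M (map Some x))))"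
  using ed_pa0[OF assms] by (simp add: accprob_def qrun_snoc pa_qstep)

lemma nsq_nonneg: "nsq v \<ge> 0"
  by (simp add: nsq_def sum_nonneg)

lemma prod_run:
  assumes "is_mmqfa M1" "is_mmqfa M2"
  shows "fst (qrun (prodq M1 M2) ws) = kronv (qdim M1) (qdim M2) (fst (qrun M1 ws)) (fst (qrun M2 ws))"
proof (induction ws rule: rev_induct)
  case Nil
  have q: "qinit M1 < qdim M1" "qinit M2 < qdim M2" using assms by (auto simp: is_mmqfa_def)
  show ?case using kron_unit[OF q] by (simp add: qrun_def prodq_simps)
next
  case (snoc s ws)
  have c1: "trans M1 s \<in> carrier_mat (qdim M1) (qdim M1)" using assms by (simp add: is_mmqfa_def unitary_mat_def)
  have c2: "trans M2 s \<in> carrier_mat (qdim M2) (qdim M2)" using assms by (simp add: is_mmqfa_def unitary_mat_def)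
  show ?case
    using snoc c1 c2 dim_run[OF assms(1)] dim_run[OF assms(2)]
    by (simp add: qrun_snoc fst_qstep prodq_simps kron_mult_vec kron_proj prodq_non[OF assms(1)])
qed

lemma prod_acc_proj:
  assumes "is_mmqfa M1" "is_mmqfa M2"
  shows "proj (qacc (prodq M1 M2)) (trans (prodq M1 M2) s *\<^sub>v fst (qrun (prodq M1 M2) ws))
    = kronv (qdim M1) (qdim M2) (proj (qacc M1) (trans M1 s *\<^sub>v fst (qrun M1 ws))) (proj (qacc M2) (trans M2 s *\<^sub>v fst (qrun M2 ws)))"
proof -
  have c1: "trans M1 s \<in> carrier_mat (qdim M1) (qdim M1)" using assms by (simp add: is_mmqfa_def unitary_mat_def)
  have c2: "trans M2 s \<in> carrier_mat (qdim M2) (qdim M2)" using assms by (simp add: is_mmqfa_def unitary_mat_def)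
  show ?thesis
    using c1 c2 dim_run[OF assms(1)] dim_run[OF assms(2)]
    by (simp add: prod_run[OF assms] prodq_simps kron_mult_vec kron_proj)
qed

lemma prod_ed:
  assumes "is_mmqfa M1" "is_mmqfa M2" "end_decisive M1"
  shows "end_decisive (prodq M1 M2)"
  unfolding end_decisive_def
proof (intro allI)
  fix w s
  have "proj (qacc M1) (trans M1 (Some s) *\<^sub>v fst (qrun M1 (map Some w))) = 0\<^sub>v (qdim M1)"
    using assms(3) unfolding end_decisive_def by blast
  then show "proj (qacc (prodq M1 M2)) (trans (prodq M1 M2) (Some s) *\<^sub>v fst (qrun (prodq M1 M2) (map Some w))) = 0\<^sub>v (qdim (prodq M1 M2))"
    unfolding prod_acc_proj[OF assms(1,2)] by (simp add: kron_zero prodq_simps(1))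
qed

lemma prod_accprob:
  assumes "is_mmqfa M1" "is_mmqfa M2" "end_decisive M1" "end_decisive M2"
  shows "accprob (prodq M1 M2) x = accprob M1 x * accprob M2 x"
proof -
  have c1: "trans M1 None \<in> carrier_mat (qdim M1) (qdim M1)" using assms by (simp add: is_mmqfa_def unitary_mat_def)
  have c2: "trans M2 None \<in> carrier_mat (qdim M2) (qdim M2)" using assms by (simp add: is_mmqfa_def unitary_mat_def)
  show ?thesis
    using c1 c2 dim_run[OF assms(1)] dim_run[OF assms(2)]
    by (simp add: accprob_formula prod_ed assms prod_acc_proj kron_nsq)
qed

lemma power_qfa:
  assumes "is_mmqfa M" "end_decisive M" "0 < k"
  shows "\<exists>M'. is_mmqfa M' \<and> end_decisive M' \<and> (\<forall>x. accprob M' x = accprob M x ^ k)"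
  using assms(3)
proof (induction k)
  case 0 then show ?case by simp
next
  case (Suc k)
  show ?case
  proof (cases "k = 0")
    case True then show ?thesis using assms by auto
  next
    case False
    then obtain M' where M': "is_mmqfa M'" "end_decisive M'" "\<forall>x. accprob M' x = accprob M x ^ k"
      using Suc by auto
    show ?thesis
      by (rule exI[of _ "prodq M' M"])
        (simp add: M' assms prodq_is prod_ed prod_accprob)
  qed
qed

theorem lemma4p10:
  fixes M :: "('a::finite) mmqfa" and L :: "'a list set" and lam eps :: real and n :: nat
  assumes "is_mmqfa M" and "end_decisive M"
    and "0 < eps" and "eps \<le> lam"
    and "\<forall>x\<in>L. accprob M x \<ge> lam + eps"
    and "\<forall>x. x \<notin> L \<longrightarrow> accprob M x \<le> lam - eps"
    and "0 < n"
  shows "\<exists>M' :: 'a mmqfa. is_mmqfa M'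
    \<and> (\<forall>x\<in>L. accprob M' x \<ge> (lam + eps) ^ n)
    \<and> (\<forall>x. x \<notin> L \<longrightarrow> accprob M' x \<le> (lam - eps) ^ n)"
proof -
  obtain M' where M': "is_mmqfa M'" "\<forall>x. accprob M' x = accprob M x ^ n"
    using power_qfa[OF assms(1,2,7)] by blast
  have nn: "\<And>x. 0 \<le> accprob M x" using accprob_formula[OF assms(2)] nsq_nonneg by simp
  show ?thesis
  proof (intro exI[of _ M'] conjI ballI allI impI)
    show "is_mmqfa M'" by fact
  next
    fix x assume "x \<in> L"
    then show "(lam + eps) ^ n \<le> accprob M' x"
      using M'(2) assms(3,4,5) by (simp add: power_mono)
  next
    fix x assume "x \<notin> L"
    then show "accprob M' x \<le> (lam - eps) ^ n"
      using M'(2) assms(3,4,6) nn by (simp add: power_mono)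
  qed
qed

end
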